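(* Let $m,n,p,c$ be positive integers. The number of lattice paths from $(0,0)$ to $(m-pn,m+n)$ using the steps $(1,1)$ and $(-p,1)$ in the plane that intersect the line $x=c$ equals $$\sum_{\substack{s=c\\ s\equiv c \pmod{p+1}}}^{c+\lfloor\frac{m+n-c}{p+1}\rfloor(p+1)}\frac{c}{s}\binom{s}{\frac{s-c}{p+1}}\binom{m+n-s}{n-\frac{s-c}{p+1}}.$$
   Context: A path with steps $(1,1)$ and $(-p,1)$ is regarded as the polygonal curve formed by its steps; it intersects the line $x=c$ if it touches or crosses that line. $\lfloor x\rfloor$ is the floor function. Binomial coefficients $\binom{N}{j}$ with $N\ge0$ equal $0$ when $j<0$ or $j>N$. *)

theory Defs
  imports Complex_Main
begin

text \<open>A path is a list of steps: True = step (1,1), False = step (-p,1).\<close>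

definition step_x :: "nat \<Rightarrow> bool \<Rightarrow> int" where
  "step_x p b = (if b then 1 else - int p)"

definition xpos :: "nat \<Rightarrow> bool list \<Rightarrow> nat \<Rightarrow> int" where
  "xpos p w k = (\<Sum>i<k. step_x p (w ! i))"

definition paths_to :: "nat \<Rightarrow> int \<Rightarrow> nat \<Rightarrow> bool list set" where
  "paths_to p a b = {w. length w = b \<and> xpos p w (length w) = a}"

definition intersects_line :: "nat \<Rightarrow> bool list \<Rightarrow> int \<Rightarrow> bool" where
  "intersects_line p w c \<longleftrightarrow>
     (\<exists>k<length w. \<exists>t::real. 0 \<le> t \<and> t \<le> 1 \<and>
        (1 - t) * of_int (xpos p w k) + t * of_int (xpos p w (Suc k)) = of_int c)"

definition binom :: "int \<Rightarrow> int \<Rightarrow> int" where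
  "binom N j = (if 0 \<le> j \<and> j \<le> N then int (nat N choose nat j) else 0)"

end

theory Submission
  imports Defs
begin

lemma xpos_0[simp]: "xpos p w 0 = 0" by (simp add: xpos_def)

lemma xpos_Suc: "xpos p w (Suc k) = xpos p w k + step_x p (w!k)"
  by (simp add: xpos_def)

lemma xpos_Cons_Suc[simp]: "xpos p (b#w) (Suc k) = step_x p b + xpos p w k"
  unfolding xpos_def sum.lessThan_Suc_shift by simp

lemma xpos_append1: "k \<le> length u \<Longrightarrow> xpos p (u@v) k = xpos p u k"
  unfolding xpos_def by (intro sum.cong) (auto simp: nth_append)

lemma xpos_append2: "xpos p (u@v) (length u + k) = xpos p u (length u) + xpos p v k"
proof (induction k)
  case 0 thus ?case by (simp add: xpos_append1)
next
  case (Suc k) thus ?case by (simp add: xpos_Suc nth_append)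
qed

lemma step_le1: "step_x p b \<le> 1" by (simp add: step_x_def)

lemma finite_len: "finite {w::bool list. length w = n}"
  using finite_lists_length_eq[of "UNIV::bool set" n] by simp

lemma ivt:
  assumes "0 < c" "c \<le> xpos p w k"
  shows "\<exists>i\<le>k. xpos p w i = c"
  using assms(2)
proof (induction k)
  case 0 thus ?case using assms(1) by simp
next
  case (Suc k)
  show ?case
  proof (cases "c \<le> xpos p w k")
    case True thus ?thesis using Suc.IH by (meson le_Suc_eq)
  next
    case False
    have "xpos p w (Suc k) \<le> xpos p w k + 1" using xpos_Suc step_le1 by (metis add_left_mono)
    hence "xpos p w (Suc k) = c" using False Suc.prems by linarith
    thus ?thesis by blast
  qed
qed

lemma intersects_iff:
  assumes "0 < c"
  shows "intersects_line p w c \<longleftrightarrow> (\<exists>k\<le>length w. xpos p w k = c)"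
proof
  assume "intersects_line p w c"
  then obtain k t where k: "k < length w" "0 \<le> t" "t \<le> 1"
    and eq: "(1 - t) * of_int (xpos p w k) + t * of_int (xpos p w (Suc k)) = (of_int c::real)"
    unfolding intersects_line_def by blast
  have xs: "xpos p w (Suc k) = xpos p w k + step_x p (w!k)" by (rule xpos_Suc)
  show "\<exists>k\<le>length w. xpos p w k = c"
  proof (cases "w!k")
    case True
    hence x1: "xpos p w (Suc k) = xpos p w k + 1" using xs by (simp add: step_x_def)
    hence "of_int c = (of_int (xpos p w k) + t :: real)" using eq by (simp add: algebra_simps)
    hence "xpos p w k \<le> c" "c \<le> xpos p w k + 1" using k by linarith+
    hence "c = xpos p w k \<or> c = xpos p w (Suc k)" using x1 by linarith
    thus ?thesis using k(1) by (metis Suc_leI less_imp_le_nat)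
  next
    case False
    hence "xpos p w (Suc k) \<le> xpos p w k" using xs by (simp add: step_x_def)
    hence "real_of_int (xpos p w (Suc k)) \<le> of_int (xpos p w k)" by simp
    hence "t * of_int (xpos p w (Suc k)) \<le> t * (of_int (xpos p w k)::real)"
      using k by (intro mult_left_mono) auto
    hence "(1 - t) * of_int (xpos p w k) + t * of_int (xpos p w (Suc k)) \<le> (of_int (xpos p w k)::real)"
      by (simp add: algebra_simps)
    hence "c \<le> xpos p w k" using eq by simp
    then obtain i where "i \<le> k" "xpos p w i = c" using ivt[OF assms] by blast
    thus ?thesis using k(1) by (intro exI[of _ i]) auto
  qed
next
  assume "\<exists>k\<le>length w. xpos p w k = c"
  then obtain k where k: "k \<le> length w" "xpos p w k = c" by blast
  show "intersects_line p w c"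
  proof (cases "k < length w")
    case True thus ?thesis unfolding intersects_line_def
      using k by (intro exI[of _ k] conjI exI[of _ 0]) auto
  next
    case False
    hence "k = length w" using k by simp
    moreover have "k \<noteq> 0" using k assms by (metis less_irrefl xpos_0)
    ultimately obtain k' where "k = Suc k'" "k' < length w"
      by (metis lessI not0_implies_Suc)
    thus ?thesis unfolding intersects_line_def
      using k by (intro exI[of _ k'] conjI exI[of _ 1]) auto
  qed
qed

definition fp :: "nat \<Rightarrow> int \<Rightarrow> bool list \<Rightarrow> bool" where
  "fp p c w \<longleftrightarrow> xpos p w (length w) = c \<and> (\<forall>k<length w. xpos p w k < c)"

definition SS :: "nat \<Rightarrow> nat \<Rightarrow> nat \<Rightarrow> bool list set" where
  "SS p c s = {w. length w = s \<and> fp p (int c) w}"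

lemma all_less_Suc_split: "(\<forall>k<Suc n. P k) \<longleftrightarrow> P 0 \<and> (\<forall>k<n. P (Suc k))"
  by (metis less_Suc_eq_0_disj Suc_less_eq zero_less_Suc)

lemma fp_Nil: "fp p c [] \<longleftrightarrow> c = 0" by (simp add: fp_def)

lemma fp_Cons: "0 < c \<Longrightarrow> fp p c (b#w) \<longleftrightarrow> fp p (c - step_x p b) w"
  unfolding fp_def by (simp add: all_less_Suc_split algebra_simps) 

lemma fp_Cons_nonpos: "c \<le> 0 \<Longrightarrow> \<not> fp p c (b#w)"
  unfolding fp_def by (auto simp: all_less_Suc_split)

lemma finite_SS: "finite (SS p c s)"
  by (rule finite_subset[OF _ finite_len[of s]]) (auto simp: SS_def)

lemma SS_0: "SS p c 0 = (if c = 0 then {[]} else {})"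
  by (auto simp: SS_def fp_Nil)

lemma SS_Suc: "0 < c \<Longrightarrow> SS p c (Suc s) = Cons True ` SS p (c - 1) s \<union> Cons False ` SS p (c + p) s"
  apply (rule set_eqI)
  subgoal for w
    by (cases w) (auto simp: SS_def fp_Cons step_x_def of_nat_diff)
  done

lemma SS_Suc0: "SS p 0 (Suc s) = {}"
  by (auto simp: SS_def length_Suc_conv fp_Cons_nonpos)

lemma card_Cons2: "finite A \<Longrightarrow> finite B \<Longrightarrow> card (Cons True ` A \<union> Cons False ` B) = card A + card B"
  by (subst card_Un_disjoint) (auto simp: card_image)

definition g :: "nat \<Rightarrow> nat \<Rightarrow> nat \<Rightarrow> real" where
  "g p c s = (if c = 0 then (if s = 0 then 1 else 0)
     else if c \<le> s \<and> (s - c) mod (p+1) = 0 then real c / real s * real (s choose ((s - c) div (p+1))) else 0)"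

lemma g_key:
  fixes c s J p :: nat
  assumes "c > 0" "J > 0" "Suc s = c + J * (p+1)"
  shows "real c / real (Suc s) * real (Suc s choose J)
       = real (c - 1) / real s * real (s choose J) + real (c + p) / real s * real (s choose (J - 1))"
proof -
  obtain J' where J: "J = Suc J'" using assms(2) not0_implies_Suc by blast
  have s0: "s > 0" using assms by (cases J) auto
  have a1: "real (Suc s - J) * real (Suc s choose J) = real (Suc s) * real (s choose J)"
    using binomial_absorb_comp[of "Suc s" J] by (metis diff_Suc_1 of_nat_mult)
  have a2: "real J * real (Suc s choose J) = real (Suc s) * real (s choose (J - 1))"
    using binomial_absorption[of J' "Suc s"] J by (metis diff_Suc_1 of_nat_mult)
  have JS: "J \<le> Suc s" using assms by (simp add: J)
  have rs: "real (Suc s) = real c + real J * (real p + 1)" using assms(3) by (metis of_nat_add of_nat_mult of_nat_Suc add.commute of_nat_1 of_nat_add)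
  define B where "B = real (Suc s choose J)"
  have e1: "real (s choose J) = real (Suc s - J) * B / real (Suc s)" using a1 B_def by (simp add: field_simps)
  have e2: "real (s choose (J - 1)) = real J * B / real (Suc s)" using a2 B_def by (simp add: field_simps)
  have d: "real (Suc s - J) = real (Suc s) - real J" using JS by (simp add: of_nat_diff)
  have c1: "real (c - 1) = real c - 1" using assms(1) by (simp add: of_nat_diff)
  have ss: "real s = real (Suc s) - 1" by simp
  have key: "(real c - 1)*(real (Suc s) - real J) + (real c + real p)*real J = real c * real s"
  proof -
    have h: "real s = real c + real J*(real p+1) - 1" using rs by simp
    show ?thesis unfolding of_nat_Suc h by (simp add: algebra_simps)
  qed
  have "real (c - 1) / real s * real (s choose J) + real (c + p) / real s * real (s choose (J - 1))
     = ((real c - 1)*(real (Suc s) - real J) + (real c + real p)*real J) * B / (real s * real (Suc s))"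
    unfolding e1 e2 d c1 using s0 by (simp add: field_simps) (simp add: add_divide_distrib[symmetric] algebra_simps)
  also have "\<dots> = real c * B / real (Suc s)" unfolding key using s0 by (simp add: field_simps del: of_nat_Suc)
  finally show ?thesis unfolding B_def by simp
qed

lemma g_formula:
  assumes "0 < c" "s - c = J*(p+1)" "c \<le> s"
  shows "g p c s = real c / real s * real (s choose J)"
proof -
  have "(s - c) mod (p+1) = 0" "(s - c) div (p+1) = J" unfolding assms(2) by (metis mod_mult_self1_is_0 mult.commute, metis nonzero_mult_div_cancel_right add_is_0 one_neq_zero)
  thus ?thesis unfolding g_def using assms by simp
qed

lemma g_rec:
  assumes c: "0 < c"
  shows "g p c (Suc s) = g p (c - 1) s + g p (c + p) s"
proof (cases "c \<le> Suc s \<and> (Suc s - c) mod (p+1) = 0")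
  case False
  have L: "g p c (Suc s) = 0" unfolding g_def using False c by (intro if_not_P[THEN trans] if_not_P) auto
  have R1: "g p (c - 1) s = 0"
  proof (cases "c = 1")
    case True thus ?thesis using False by (cases s) (auto simp: g_def)
  next
    case False': False
    thus ?thesis using False c by (auto simp: g_def Suc_diff_le)
  qed
  have R2: "g p (c + p) s = 0"
  proof -
    have "\<not> (c + p \<le> s \<and> (s - (c + p)) mod (p + 1) = 0)"
    proof
      assume h: "c + p \<le> s \<and> (s - (c + p)) mod (p + 1) = 0"
      hence "Suc s - c = (s - (c + p)) + (p+1)" by auto
      hence "(Suc s - c) mod (p+1) = (s - (c + p)) mod (p+1)" by (simp only: mod_add_self2)
      hence "(Suc s - c) mod (p+1) = 0" using h by simp
      thus False using False h by auto
    qed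
    thus ?thesis unfolding g_def using c by (intro if_not_P[THEN trans] if_not_P) auto
  qed
  show ?thesis using L R1 R2 by simp
next
  case True
  define J where "J = (Suc s - c) div (p+1)"
  have sJ: "Suc s = c + J * (p+1)" using True unfolding J_def
    by (metis add_diff_inverse_nat minus_mod_eq_div_mult [symmetric] diff_zero not_less mult.commute)
  have L: "g p c (Suc s) = real c / real (Suc s) * real (Suc s choose J)"
    using True c by (simp add: g_def J_def)
  show ?thesis
  proof (cases "J = 0")
    case True
    hence sc: "s = c - 1" using sJ by simp
    have "g p (c + p) s = 0" using sc c by (simp add: g_def)
    moreover have "g p (c - 1) s = 1"
      using sc c by (cases "c = 1") (auto simp: g_def)
    moreover have "g p c (Suc s) = 1" using L True sc c by simp
    ultimately show ?thesis by simp
  next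
    case False
    have s0: "s > 0" using sJ False c by (cases J) auto
    have G2: "g p (c + p) s = real (c + p) / real s * real (s choose (J - 1))"
    proof -
      have "s - (c + p) = (J - 1) * (p + 1)" "c + p \<le> s" using sJ False by (cases J; auto)+
      thus ?thesis using c by (intro g_formula) auto
    qed
    have G1: "g p (c - 1) s = real (c - 1) / real s * real (s choose J)"
    proof (cases "c = 1")
      case True thus ?thesis using s0 by (simp add: g_def)
    next
      case False
      have "s - (c - 1) = J * (p + 1)" "c - 1 \<le> s" using sJ c by simp_all
      thus ?thesis using c False by (intro g_formula) auto
    qed
    show ?thesis unfolding L G1 G2 using g_key[OF c _ sJ] False by simp
  qed
qed

lemma card_SS: "real (card (SS p c s)) = g p c s"
proof (induction s arbitrary: c)
  case 0 thus ?case by (simp add: SS_0 g_def)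
next
  case (Suc s)
  show ?case
  proof (cases "c = 0")
    case True thus ?thesis by (simp add: SS_Suc0 g_def)
  next
    case False
    hence "0 < c" by simp
    thus ?thesis using Suc.IH by (simp add: SS_Suc card_Cons2 finite_SS g_rec)
  qed
qed

definition TT :: "nat \<Rightarrow> int \<Rightarrow> nat \<Rightarrow> bool list set" where
  "TT p x L = {w. length w = L \<and> xpos p w L = x}"

definition hc :: "nat \<Rightarrow> int \<Rightarrow> nat \<Rightarrow> int" where
  "hc p x L = (if (int L - x) mod int (p+1) = 0 then binom (int L) ((int L - x) div int (p+1)) else 0)"

lemma finite_TT: "finite (TT p x L)"
  by (rule finite_subset[OF _ finite_len[of L]]) (auto simp: TT_def)

lemma TT_0: "TT p x 0 = (if x = 0 then {[]} else {})"
  by (auto simp: TT_def)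

lemma TT_Suc: "TT p x (Suc L) = Cons True ` TT p (x - 1) L \<union> Cons False ` TT p (x + int p) L"
  apply (rule set_eqI)
  subgoal for w
    by (cases w) (auto simp: TT_def step_x_def algebra_simps)
  done

lemma binom_nat: "binom (int a) (int b) = int (a choose b)"
  by (auto simp: binom_def binomial_eq_0)

lemma binom_pascal: "N \<ge> 0 \<Longrightarrow> binom (N + 1) f = binom N f + binom N (f - 1)"
proof -
  assume N: "N \<ge> 0"
  obtain n where n: "N = int n" using N nonneg_int_cases by blast
  show ?thesis
  proof (cases "f \<le> 0")
    case True
    thus ?thesis using n by (cases "f = 0") (auto simp: binom_def)
  next
    case False
    then obtain k where k: "f = int (Suc k)" by (metis gr0_implies_Suc not_le zero_less_imp_eq_int of_nat_0_less_iff)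
    have "binom (N+1) f = int (Suc n choose Suc k)" unfolding n k
      by (metis binom_nat of_nat_Suc add.commute)
    also have "\<dots> = int (n choose k) + int (n choose Suc k)" by simp
    also have "\<dots> = binom N f + binom N (f - 1)"
    proof -
      have f1: "f - 1 = int k" using k by simp
      show ?thesis unfolding f1 unfolding n k binom_nat by simp
    qed
    finally show ?thesis .
  qed
qed

lemma hc_0: "hc p x 0 = (if x = 0 then 1 else 0)"
proof -
  have *: "x = 0" if h: "(- x) mod int (p+1) = 0" "- x div int (p+1) = 0"
  proof -
    have "- x = (- x) div int (p+1) * int (p+1) + (- x) mod int (p+1)" by (rule div_mult_mod_eq[symmetric])
    thus ?thesis using h by simp
  qed
  show ?thesis
  proof (cases "x = 0")
    case True thus ?thesis by (simp add: hc_def binom_def)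
  next
    case False
    hence "\<not> ((- x) mod int (p+1) = 0 \<and> - x div int (p+1) = 0)" using * by auto
    thus ?thesis using False unfolding hc_def binom_def by auto
  qed
qed

lemma hc_Suc: "hc p x (Suc L) = hc p (x - 1) L + hc p (x + int p) L"
proof -
  define q where "q = int (p+1)"
  have q0: "q > 0" unfolding q_def by simp
  have a: "int L - (x - 1) = 1 + int L - x" by simp
  have b: "int L - (x + int p) = (int (Suc L) - x) - q" unfolding q_def by simp
  have m: "(int L - (x + int p)) mod q = (int (Suc L) - x) mod q" unfolding b by (rule minus_mod_self2)
  have d: "(int (Suc L) - x) mod q = 0 \<Longrightarrow> (int L - (x + int p)) div q = (int (Suc L) - x) div q - 1"
    unfolding b using q0 div_add_self2[of q "int (Suc L) - x - q"] by simp
  show ?thesis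
  proof (cases "(int (Suc L) - x) mod q = 0")
    case True
    have "hc p x (Suc L) = binom (int L + 1) ((int (Suc L) - x) div q)"
      using True unfolding hc_def q_def by (simp add: add.commute)
    also have "\<dots> = binom (int L) ((int (Suc L) - x) div q) + binom (int L) ((int (Suc L) - x) div q - 1)"
      by (rule binom_pascal) simp
    also have "\<dots> = hc p (x - 1) L + hc p (x + int p) L"
      unfolding hc_def q_def[symmetric] using True m d[OF True] by (simp add: a)
    finally show ?thesis .
  next
    case False
    thus ?thesis unfolding hc_def q_def[symmetric] using m by (simp add: a)
  qed
qed

lemma card_TT: "int (card (TT p x L)) = hc p x L"
proof (induction L arbitrary: x)
  case 0 thus ?case by (simp add: TT_0 hc_0)
next
  case (Suc L)
  thus ?case by (simp add: TT_Suc card_Cons2 finite_TT hc_Suc)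
qed

definition BB :: "nat \<Rightarrow> nat \<Rightarrow> int \<Rightarrow> nat \<Rightarrow> nat \<Rightarrow> bool list set" where
  "BB p c e N s = (\<lambda>(u,v). u @ v) ` (SS p c s \<times> TT p (e - int c) (N - s))"

lemma A_eq:
  assumes c: "0 < c"
  shows "{w \<in> paths_to p e N. intersects_line p w (int c)} = (\<Union>s\<in>{..N}. BB p c e N s)"
proof (rule set_eqI, rule iffI)
  fix w assume "w \<in> {w \<in> paths_to p e N. intersects_line p w (int c)}"
  hence w1: "w \<in> paths_to p e N" and w2: "intersects_line p w (int c)" by simp_all
  from w1 have len: "length w = N" and xe: "xpos p w N = e" unfolding paths_to_def by auto
  have c': "0 < int c" using c by simp
  from w2 have hit: "\<exists>k\<le>N. xpos p w k = int c" unfolding intersects_iff[OF c'] len .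
  define s where "s = (LEAST k. xpos p w k = int c)"
  obtain k where k: "k \<le> N" "xpos p w k = int c" using hit by blast
  have xs: "xpos p w s = int c" unfolding s_def using k(2) by (rule LeastI)
  have sk: "s \<le> k" unfolding s_def using k(2) by (rule Least_le)
  have below: "xpos p w i < int c" if "i < s" for i
  proof (rule ccontr)
    assume "\<not> xpos p w i < int c"
    hence "int c \<le> xpos p w i" by simp
    then obtain i' where "i' \<le> i" "xpos p w i' = int c" using ivt[OF c'] by blast
    moreover have "i' < s" using \<open>i' \<le> i\<close> that by simp
    ultimately show False using not_less_Least[of i' "\<lambda>k. xpos p w k = int c"] unfolding s_def by simp
  qed
  have sN: "s \<le> N" using sk k by simp
  define u where "u = take s w"
  define v where "v = drop s w"
  have w: "w = u @ v" unfolding u_def v_def by simp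
  have lu: "length u = s" using sN len unfolding u_def by simp
  have lv: "length v = N - s" using len unfolding v_def by simp
  have "u \<in> SS p c s"
  proof -
    have "xpos p u i = xpos p w i" if "i \<le> s" for i using xpos_append1[of i u p v] w lu that by simp
    thus ?thesis unfolding SS_def fp_def using lu xs below by simp
  qed
  moreover have "v \<in> TT p (e - int c) (N - s)"
  proof -
    have "xpos p w (s + (N - s)) = xpos p u s + xpos p v (N - s)"
      using xpos_append2[of p u v "N - s"] w lu by simp
    moreover have "xpos p u s = int c" using xs xpos_append1[of s u p v] w lu by simp
    ultimately show ?thesis using xe sN lv unfolding TT_def by simp
  qed
  ultimately have "(u, v) \<in> SS p c s \<times> TT p (e - int c) (N - s)" by simp
  hence "(\<lambda>(u,v). u @ v) (u, v) \<in> BB p c e N s" unfolding BB_def by (rule imageI)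
  hence "w \<in> BB p c e N s" using w by simp
  thus "w \<in> (\<Union>s\<in>{..N}. BB p c e N s)" using sN by blast
next
  fix w assume "w \<in> (\<Union>s\<in>{..N}. BB p c e N s)"
  then obtain s u v where sN: "s \<le> N" and u: "u \<in> SS p c s" and v: "v \<in> TT p (e - int c) (N - s)"
    and w: "w = u @ v" unfolding BB_def by auto
  have lu: "length u = s" and xu: "xpos p u s = int c" using u unfolding SS_def fp_def by auto
  have lv: "length v = N - s" and xv: "xpos p v (N - s) = e - int c" using v unfolding TT_def by auto
  have lw: "length w = N" using w lu lv sN by simp
  have "xpos p w (s + (N - s)) = xpos p u s + xpos p v (N - s)"
    using xpos_append2[of p u v "N - s"] w lu by simp
  hence xe: "xpos p w N = e" using sN xu xv by simp
  have "xpos p w s = int c" using xu xpos_append1[of s u p v] w lu by simp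
  hence "intersects_line p w (int c)" using intersects_iff[of "int c" p w] c lw sN by auto
  thus "w \<in> {w \<in> paths_to p e N. intersects_line p w (int c)}"
    using lw xe by (simp add: paths_to_def)
qed

lemma BB_elim:
  assumes "w \<in> BB p c e N s"
  obtains u v where "u \<in> SS p c s" "v \<in> TT p (e - int c) (N - s)" "w = u @ v"
proof -
  from assms obtain x where x: "x \<in> SS p c s \<times> TT p (e - int c) (N - s)" "w = (\<lambda>(u,v). u @ v) x"
    unfolding BB_def by (rule imageE)
  obtain u v where uv: "x = (u, v)" by (cases x)
  show ?thesis using x uv by (intro that[of u v]) auto
qed

lemma BB_disj:
  assumes "s < s'"
  shows "BB p c e N s \<inter> BB p c e N s' = {}"
proof (rule ccontr)
  assume "BB p c e N s \<inter> BB p c e N s' \<noteq> {}"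
  then obtain w where w1: "w \<in> BB p c e N s" and w2: "w \<in> BB p c e N s'" by blast
  obtain u v where u: "u \<in> SS p c s" and wu: "w = u @ v" using w1 by (rule BB_elim)
  obtain u' v' where u': "u' \<in> SS p c s'" and wu': "w = u' @ v'" using w2 by (rule BB_elim)
  have lu: "length u = s" and xu: "xpos p u s = int c" using u unfolding SS_def fp_def by auto
  have lu': "length u' = s'" and b: "\<forall>k<s'. xpos p u' k < int c" using u' unfolding SS_def fp_def by auto
  have "xpos p w s = int c" using xu xpos_append1[of s u p v] lu wu by simp
  moreover have "xpos p w s = xpos p u' s" using xpos_append1[of s u' p v'] lu' assms wu' by simp
  ultimately show False using b assms by fastforce
qed

lemma card_BB: "card (BB p c e N s) = card (SS p c s) * card (TT p (e - int c) (N - s))"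
proof -
  have "inj_on (\<lambda>(u,v). u @ v) (SS p c s \<times> TT p (e - int c) (N - s))"
  proof (rule inj_onI)
    fix x y assume x: "x \<in> SS p c s \<times> TT p (e - int c) (N - s)" and y: "y \<in> SS p c s \<times> TT p (e - int c) (N - s)"
      and eq: "(\<lambda>(u,v). u @ v) x = (\<lambda>(u,v). u @ v) y"
    obtain u1 v1 where x1: "x = (u1, v1)" by (cases x)
    obtain u2 v2 where y1: "y = (u2, v2)" by (cases y)
    have "length u1 = s" "length u2 = s" using x y x1 y1 by (auto simp: SS_def)
    moreover have "u1 @ v1 = u2 @ v2" using eq x1 y1 by simp
    ultimately show "x = y" using x1 y1 by simp
  qed
  thus ?thesis unfolding BB_def by (simp add: card_image card_cartesian_product)
qed

lemma finite_BB: "finite (BB p c e N s)"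
  unfolding BB_def by (intro finite_imageI finite_cartesian_product finite_SS finite_TT)

lemma card_A:
  assumes c: "0 < c"
  shows "real (card {w \<in> paths_to p e N. intersects_line p w (int c)})
       = (\<Sum>s\<in>{..N}. g p c s * real_of_int (hc p (e - int c) (N - s)))"
proof -
  have "card (\<Union>s\<in>{..N}. BB p c e N s) = (\<Sum>s\<in>{..N}. card (BB p c e N s))"
  proof (rule card_UN_disjoint)
    show "\<forall>i\<in>{..N}. \<forall>j\<in>{..N}. i \<noteq> j \<longrightarrow> BB p c e N i \<inter> BB p c e N j = {}"
      using BB_disj by (metis Int_commute linorder_neqE_nat)
  qed (auto simp: finite_BB)
  hence "real (card {w \<in> paths_to p e N. intersects_line p w (int c)})
      = (\<Sum>s\<in>{..N}. real (card (SS p c s)) * real (card (TT p (e - int c) (N - s))))"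
    unfolding A_eq[OF c] card_BB by (simp only: of_nat_sum of_nat_mult)
  also have "\<dots> = (\<Sum>s\<in>{..N}. g p c s * real_of_int (hc p (e - int c) (N - s)))"
    by (intro sum.cong refl) (simp add: card_SS flip: card_TT)
  finally show ?thesis .
qed

lemma set_char:
  fixes N p c :: nat and t :: int
  shows "(int c \<le> t \<and> t \<le> int c + \<lfloor>(real N - real c) / real (p + 1)\<rfloor> * int (p + 1) \<and>
          t mod int (p + 1) = int c mod int (p + 1))
     \<longleftrightarrow> (int c \<le> t \<and> t \<le> int N \<and> t mod int (p + 1) = int c mod int (p + 1))"
proof -
  define q where "q = int (p+1)"
  have q0: "q > 0" unfolding q_def by simp
  have rq: "real (p+1) = real_of_int q" unfolding q_def by simp
  define F where "F = \<lfloor>(real N - real c) / real (p + 1)\<rfloor>"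
  have F1: "real_of_int (F * q) \<le> real N - real c"
  proof -
    have "real_of_int F \<le> (real N - real c) / real_of_int q" unfolding F_def rq by (rule of_int_floor_le)
    hence "real_of_int F * real_of_int q \<le> real N - real c" using q0 by (simp add: pos_le_divide_eq)
    thus ?thesis by simp
  qed
  show ?thesis unfolding F_def[symmetric] q_def[symmetric]
  proof safe
    fix t assume "t \<le> int c + F * q"
    hence "real_of_int t \<le> real c + real_of_int (F * q)" by linarith
    thus "t \<le> int N" using F1 by linarith
  next
    fix t assume h: "int c \<le> t" "t \<le> int N" "t mod q = int c mod q"
    define j where "j = (t - int c) div q"
    have "(t - int c) mod q = 0" using h(3) by (simp add: mod_diff_cong mod_diff_eq[symmetric])
    hence tj: "t - int c = j * q" unfolding j_def by (metis add.right_neutral div_mult_mod_eq)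
    have "real_of_int j * real_of_int q \<le> real N - real c" using tj h(2)
      by (metis of_int_diff of_int_le_iff of_int_mult of_int_of_nat_eq diff_right_mono)
    hence "real_of_int j \<le> (real N - real c) / real (p+1)" unfolding rq using q0 by (simp add: pos_le_divide_eq)
    hence "j \<le> F" unfolding F_def by (simp add: le_floor_iff)
    hence "j * q \<le> F * q" using q0 by simp
    thus "t \<le> int c + F * q" using tj by linarith
  qed
qed

lemma summand:
  fixes m n p c s :: nat
  assumes c: "0 < c" and sN: "s \<le> m + n"
  shows "g p c s * real_of_int (hc p (int m - int p * int n - int c) (m + n - s)) =
    (if int s \<in> {s::int. int c \<le> s \<and>
               s \<le> int c + \<lfloor>(real (m + n) - real c) / real (p + 1)\<rfloor> * int (p + 1) \<and>
               s mod int (p + 1) = int c mod int (p + 1)}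
     then real c / real_of_int (int s) * real_of_int (binom (int s) ((int s - int c) div int (p + 1)))
         * real_of_int (binom (int (m + n) - int s) (int n - (int s - int c) div int (p + 1))) else 0)"
    (is "?L = (if int s \<in> ?Set then ?F else 0)")
proof -
  define q where "q = int (p+1)"
  have q0: "q > 0" unfolding q_def by simp
  have mem: "int s \<in> ?Set \<longleftrightarrow> int c \<le> int s \<and> int s \<le> int (m+n) \<and> int s mod q = int c mod q"
    using set_char[of c "int s" "m+n" p] unfolding q_def by simp
  show ?thesis
  proof (cases "c \<le> s \<and> (s - c) mod (p+1) = 0")
    case True
    define J where "J = (s - c) div (p+1)"
    have sJ: "s - c = J * (p+1)" using True unfolding J_def by (metis add.right_neutral div_mult_mod_eq)
    have ints: "int s = int c + int J * q" using sJ True unfolding q_def by (metis le_add_diff_inverse of_nat_add of_nat_mult)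
    have g1: "g p c s = real c / real s * real (s choose J)" using g_formula[OF c sJ] True by simp
    have in1: "int s \<in> ?Set" unfolding mem using ints True sN by simp
    have dv: "(int s - int c) div q = int J" using ints q0 by simp
    have e1: "int (m + n - s) - (int m - int p * int n - int c) = (int n - int J) * q"
      using ints sN unfolding q_def by (simp add: of_nat_diff algebra_simps)
    have h1: "hc p (int m - int p * int n - int c) (m + n - s) = binom (int (m + n - s)) (int n - int J)"
      unfolding hc_def q_def[symmetric] e1 using q0 by simp
    have e2: "int (m + n) - int s = int (m + n - s)" using sN by (simp add: of_nat_diff)
    show ?thesis unfolding g1 h1 using in1 unfolding q_def[symmetric] dv e2 binom_nat by simp
  next
    case False
    have g0: "g p c s = 0" unfolding g_def using False c by (intro if_not_P[THEN trans] if_not_P) auto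
    have nin: "int s \<notin> ?Set"
    proof
      assume "int s \<in> ?Set"
      hence h: "c \<le> s" "int s mod q = int c mod q" unfolding mem by auto
      hence "(int s - int c) mod q = 0" by (simp add: mod_diff_cong mod_diff_eq[symmetric])
      hence "int (s - c) mod q = 0" using h(1) by (simp add: of_nat_diff)
      hence "int ((s - c) mod (p+1)) = 0" unfolding q_def by (simp add: of_nat_mod)
      thus False using False h(1) by simp
    qed
    show ?thesis unfolding if_not_P[OF nin] g0 by simp
  qed
qed

theorem corollary3p1:
  fixes m n p c :: nat
  assumes "m > 0" "n > 0" "p > 0" "c > 0"
  shows "real (card {w \<in> paths_to p (int m - int p * int n) (m + n).
                       intersects_line p w (int c)}) =
    (\<Sum>s \<in> {s::int. int c \<le> s \<and>
               s \<le> int c + \<lfloor>(real (m + n) - real c) / real (p + 1)\<rfloor> * int (p + 1) \<and>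
               s mod int (p + 1) = int c mod int (p + 1)}.
       real c / real_of_int s * real_of_int (binom s ((s - int c) div int (p + 1)))
         * real_of_int (binom (int (m + n) - s) (int n - (s - int c) div int (p + 1))))"
proof -
  define Set where "Set = {s::int. int c \<le> s \<and>
               s \<le> int c + \<lfloor>(real (m + n) - real c) / real (p + 1)\<rfloor> * int (p + 1) \<and>
               s mod int (p + 1) = int c mod int (p + 1)}"
  define F where "F = (\<lambda>s::int. real c / real_of_int s * real_of_int (binom s ((s - int c) div int (p + 1)))
         * real_of_int (binom (int (m + n) - s) (int n - (s - int c) div int (p + 1))))"
  have c: "0 < c" using assms by simp
  have "real (card {w \<in> paths_to p (int m - int p * int n) (m + n). intersects_line p w (int c)})
     = (\<Sum>s\<in>{..m+n}. g p c s * real_of_int (hc p (int m - int p * int n - int c) (m + n - s)))"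
    by (rule card_A[OF c])
  also have "\<dots> = (\<Sum>s\<in>{..m+n}. (if int s \<in> Set then F (int s) else 0))"
    by (intro sum.cong refl) (simp only: summand[OF c] Set_def F_def atMost_iff)
  also have "\<dots> = (\<Sum>t\<in>int ` {..m+n}. (if t \<in> Set then F t else 0))"
    by (simp add: sum.reindex inj_on_def)
  also have "\<dots> = (\<Sum>t\<in>int ` {..m+n} \<inter> Set. F t)"
    by (rule sum.inter_restrict[symmetric]) simp
  also have "int ` {..m+n} \<inter> Set = Set"
  proof -
    have "Set \<subseteq> int ` {..m+n}"
    proof
      fix t assume "t \<in> Set"
      hence "int c \<le> t" "t \<le> int (m+n)" using set_char[of c t "m+n" p] unfolding Set_def by auto
      hence "t = int (nat t)" "nat t \<le> m + n" by auto
      thus "t \<in> int ` {..m+n}" by (metis atMost_iff imageI)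
    qed
    thus ?thesis by blast
  qed
  finally show ?thesis unfolding F_def Set_def .
qed

end
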